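(* Let $\alpha$ be a set with an involution $\tau$. For $a,b\in\alpha$ let $w_{a,b}$ denote the nanoword $(\{A,B\},ABAB)$ with $|A|=a$, $|B|=b$. If $\tau(a)\neq b$, then $w_{a,b}$ is not contractible. Two nanowords $w_{a,b}$ and $w_{a',b'}$ with $\tau(a)\neq b$ and $\tau(a')\neq b'$ are homotopic if and only if $a=a'$ and $b=b'$.
   Context: Fix a set $\alpha$ with an involution $\tau:\alpha\to\alpha$. An $\alpha$-alphabet is a set $\mathcal A$ with a map $\mathcal A\to\alpha$, $A\mapsto|A|$. A nanoword over $\alpha$ is a pair $(\mathcal A,w)$ where $\mathcal A$ is a finite $\alpha$-alphabet and $w$ is a word in the letters of $\mathcal A$ in which every letter of $\mathcal A$ occurs exactly twice; its length is the length of $w$. Two nanowords $(\mathcal A_1,w_1),(\mathcal A_2,w_2)$ are isomorphic if there is a bijection $f:\mathcal A_1\to\mathcal A_2$ with $|f(A)|=|A|$ for all $A$ and $w_2$ is obtained from $w_1$ by applying $f$ letterwise. Homotopy moves (here $x,y,z,t$ are words in the remaining letters, and smaller alphabets carry the restricted projection): (1) $(\mathcal A,xAAy)\mapsto(\mathcal A\setminus\{A\},xy)$; (2) $(\mathcal A,xAByBAz)\mapsto(\mathcal A\setminus\{A,B\},xyz)$ whenever $|B|=\tau(|A|)$; (3) $(\mathcal A,xAByACzBCt)\mapsto(\mathcal A,xBAyCAzCBt)$ whenever $A,B,C$ are distinct and $|A|=|B|=|C|$. Homotopy is the equivalence relation on nanowords generated by isomorphisms, these moves and their inverses. A nanoword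 is contractible if it is homotopic to the empty nanoword. *)

theory Defs
  imports Main
begin

text \<open>A nanoword over alpha is represented as a pair (w, p): w is a word whose letters
  are natural numbers, the alphabet is set w, and p restricted to set w is the projection
  to alpha. Values of p outside set w are irrelevant (isomorphism identifies them).\<close>

type_synonym 'a nanoword = "nat list \<times> (nat \<Rightarrow> 'a)"

definition is_nanoword :: "'a nanoword \<Rightarrow> bool" where
  "is_nanoword u \<longleftrightarrow> (\<forall>A\<in>set (fst u). count_list (fst u) A = 2)"

definition nw_iso :: "'a nanoword \<Rightarrow> 'a nanoword \<Rightarrow> bool" where
  "nw_iso u v \<longleftrightarrow> is_nanoword u \<and> is_nanoword v \<and>
     (\<exists>f. bij_betw f (set (fst u)) (set (fst v)) \<and>
          (\<forall>A\<in>set (fst u). snd v (f A) = snd u A) \<and>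
          fst v = map f (fst u))"

definition nw_move :: "('a \<Rightarrow> 'a) \<Rightarrow> 'a nanoword \<Rightarrow> 'a nanoword \<Rightarrow> bool" where
  "nw_move \<tau> u v \<longleftrightarrow> is_nanoword u \<and> is_nanoword v \<and> snd v = snd u \<and>
    ((\<exists>x y A. fst u = x @ [A, A] @ y \<and> fst v = x @ y)
   \<or> (\<exists>x y z A B. fst u = x @ [A, B] @ y @ [B, A] @ z \<and> fst v = x @ y @ z
          \<and> snd u B = \<tau> (snd u A))
   \<or> (\<exists>x y z t A B C. fst u = x @ [A, B] @ y @ [A, C] @ z @ [B, C] @ t
          \<and> fst v = x @ [B, A] @ y @ [C, A] @ z @ [C, B] @ t
          \<and> A \<noteq> B \<and> B \<noteq> C \<and> A \<noteq> C
          \<and> snd u A = snd u B \<and> snd u B = snd u C))"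

definition nw_homotopic :: "('a \<Rightarrow> 'a) \<Rightarrow> 'a nanoword \<Rightarrow> 'a nanoword \<Rightarrow> bool" where
  "nw_homotopic \<tau> = (symclp (\<lambda>u v. nw_iso u v \<or> nw_move \<tau> u v))\<^sup>*\<^sup>*"

definition nw_empty :: "'a nanoword" where
  "nw_empty = ([], undefined)"

definition nw_contractible :: "('a \<Rightarrow> 'a) \<Rightarrow> 'a nanoword \<Rightarrow> bool" where
  "nw_contractible \<tau> u \<longleftrightarrow> nw_homotopic \<tau> u nw_empty"

text \<open>w_{a,b} = ({A,B}, ABAB) with |A| = a, |B| = b; here A = 0, B = 1.\<close>
definition w_ab :: "'a \<Rightarrow> 'a \<Rightarrow> 'a nanoword" where
  "w_ab a b = ([0, 1, 0, 1], (\<lambda>n. if n = 0 then a else b))"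

end

theory Submission
  imports Defs "HOL-Library.Z2"
begin

definition fi :: "nat list \<Rightarrow> nat \<Rightarrow> nat" where
  "fi w X = (LEAST k. k < length w \<and> w!k = X)"
definition li :: "nat list \<Rightarrow> nat \<Rightarrow> nat" where
  "li w X = (GREATEST k. k < length w \<and> w!k = X)"
definition pos :: "nat list \<Rightarrow> nat \<Rightarrow> nat \<Rightarrow> bool" where
  "pos w X Y \<longleftrightarrow> fi w X < fi w Y \<and> fi w Y < li w X \<and> li w X < li w Y"

lemma occ_card: "count_list w X = card {k. k < length w \<and> w!k = X}"
proof -
  have "{k. k<length w \<and> X = w!k} = {k. k < length w \<and> w!k = X}" by auto
  then show ?thesis by (simp add: count_list_eq_length_filter length_filter_conv_card)
qed

lemma fi_li_eq:
  assumes "count_list w X = 2" "i < j" "j < length w" "w!i = X" "w!j = X"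
  shows "fi w X = i" "li w X = j"
proof -
  have S: "{k. k < length w \<and> w!k = X} = {i,j}"
  proof -
    have "{i,j} \<subseteq> {k. k < length w \<and> w!k = X}" using assms by auto
    moreover have "card {k. k < length w \<and> w!k = X} = 2" using assms(1) by (simp add: occ_card)
    moreover have "card {i,j} = 2" using assms by simp
    moreover have "finite {k. k < length w \<and> w!k = X}" by simp
    ultimately show ?thesis using card_subset_eq by (metis (no_types, lifting))
  qed
  have E: "\<And>k. (k < length w \<and> w!k = X) \<longleftrightarrow> k = i \<or> k = j" using S by blast
  show "fi w X = i" unfolding fi_def
  proof (rule Least_equality)
    show "i < length w \<and> w ! i = X" using assms by simp
    fix y assume "y < length w \<and> w ! y = X"
    then have "y = i \<or> y = j" using E by blast
    then show "i \<le> y" using assms(2) by auto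
  qed
  show "li w X = j" unfolding li_def
  proof (rule Greatest_equality)
    show "j < length w \<and> w ! j = X" using assms by simp
    fix y assume "y < length w \<and> w ! y = X"
    then have "y = i \<or> y = j" using E by blast
    then show "y \<le> j" using assms(2) by auto
  qed
qed

lemma nw_occ:
  assumes "count_list w X = 2"
  shows "fi w X < li w X \<and> li w X < length w \<and> w!(fi w X) = X \<and> w!(li w X) = X \<and>
     (\<forall>k<length w. w!k = X \<longrightarrow> k = fi w X \<or> k = li w X)"
proof -
  have "card {k. k < length w \<and> w!k = X} = 2" using assms by (simp add: occ_card)
  then obtain i j where ij: "{k. k < length w \<and> w!k = X} = {i,j}" "i \<noteq> j"
    by (auto simp: card_2_iff)
  then obtain i' j' where ij': "{k. k < length w \<and> w!k = X} = {i',j'}" "i' < j'"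
  proof (cases "i < j")
    case True then show ?thesis using that ij by blast
  next
    case False then have "j < i" using ij(2) by simp
    then show ?thesis using that[of j i] ij by (simp add: insert_commute)
  qed
  then have h: "i' < length w" "j' < length w" "w!i' = X" "w!j' = X" by auto
  have "fi w X = i'" "li w X = j'" using fi_li_eq[OF assms ij'(2) h(2) h(3) h(4)] by auto
  then show ?thesis using ij' h by auto
qed

lemma lt_shift1: "(i::nat) \<noteq> s \<Longrightarrow> (i < Suc s) = (i < s)" by auto
lemma gt_shift1: "(i::nat) \<noteq> Suc s \<Longrightarrow> (Suc s < i) = (s < i)" by auto

lemma pos_asym: "pos w X Y \<Longrightarrow> \<not> pos w Y X" by (auto simp: pos_def)
lemma pos_irr: "\<not> pos w X X" by (auto simp: pos_def)

lemma embed: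
  assumes cu: "\<forall>A\<in>set u. count_list u A = 2" and cv: "\<forall>A\<in>set v. count_list v A = 2"
    and g: "\<And>i j. i < j \<Longrightarrow> g i < (g j::nat)"
    and gv: "\<And>k. k < length v \<Longrightarrow> g k < length u \<and> u!(g k) = v!k" and X: "X \<in> set v"
  shows "fi u X = g (fi v X) \<and> li u X = g (li v X)"
proof -
  have o: "fi v X < li v X" "li v X < length v" "v!(fi v X) = X" "v!(li v X) = X"
    using nw_occ[of v X] cv X by auto
  have Xu: "X \<in> set u" using gv[OF o(2)] o by (metis nth_mem)
  have l: "g (li v X) < length u" "u!(g (fi v X)) = X" "u!(g (li v X)) = X" using gv o by auto
  have c: "count_list u X = 2" using cu Xu by auto
  show ?thesis using fi_li_eq[OF c g[OF o(1)] l] by auto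
qed


locale invd =
  fixes \<tau> :: "'a \<Rightarrow> 'a" and \<chi>1 \<chi>2 :: "'a \<Rightarrow> 'g::ab_group_add" and \<psi> :: "'a \<Rightarrow> 'g \<Rightarrow> 'h::ab_group_add"
  assumes C1: "\<psi> x 0 = 0"
    and C2a: "\<chi>1 (\<tau> a) = - \<chi>1 a" and C2b: "\<chi>2 (\<tau> a) = - \<chi>2 a"
    and C3: "\<psi> (\<tau> a) L = - \<psi> a L"
    and C4: "\<psi> a (L + (\<chi>2 a + \<chi>1 a)) = \<psi> a L"
begin

definition T :: "nat list \<Rightarrow> (nat \<Rightarrow> 'a) \<Rightarrow> nat \<Rightarrow> nat \<Rightarrow> 'g" where
  "T w p X Y = (if pos w X Y then \<chi>1 (p Y) else if pos w Y X then \<chi>2 (p Y) else 0)"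
definition lk :: "nat list \<Rightarrow> (nat \<Rightarrow> 'a) \<Rightarrow> nat \<Rightarrow> 'g" where
  "lk w p X = (\<Sum>Y\<in>set w. T w p X Y)"
definition Inv :: "'a nanoword \<Rightarrow> 'h" where
  "Inv u = (\<Sum>X\<in>set (fst u). \<psi> (snd u X) (lk (fst u) (snd u) X))"

lemma move1:
  assumes nu: "is_nanoword (x@[A,A]@y, p)" and nv: "is_nanoword (x@y, p)"
  shows "Inv (x@[A,A]@y, p) = Inv (x@y, p)"
proof -
  define u where "u = x@[A,A]@y"
  define v where "v = x@y"
  define n where "n = length x"
  have cu: "\<forall>B\<in>set u. count_list u B = 2" using nu by (simp add: is_nanoword_def u_def)
  have cv: "\<forall>B\<in>set v. count_list v B = 2" using nv by (simp add: is_nanoword_def v_def)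
  have cA: "count_list u A = 2" using cu by (simp add: u_def)
  then have Anv: "A \<notin> set v" by (simp add: u_def v_def count_list_0_iff)
  have setu: "set u = insert A (set v)" by (auto simp: u_def v_def)
  define g where "g k = (if k < n then k else k + 2)" for k
  have g: "\<And>i j. i<j \<Longrightarrow> g i < g j" by (auto simp: g_def)
  have gmono: "\<And>i j. g i < g j \<longleftrightarrow> i < j" by (auto simp: g_def)
  have gv: "\<And>k. k < length v \<Longrightarrow> g k < length u \<and> u!(g k) = v!k"
    by (auto simp: g_def u_def v_def n_def nth_append)
  have fD: "\<And>D. D \<in> set v \<Longrightarrow> fi u D = g (fi v D) \<and> li u D = g (li v D)"
    using embed[OF cu cv g gv] by blast
  have fA: "fi u A = n" "li u A = Suc n"
    using fi_li_eq[of u A n "Suc n"] cA by (auto simp: u_def n_def nth_append)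
  have gne: "\<And>k. g k \<noteq> n \<and> g k \<noteq> Suc n" by (simp add: g_def)
  have posvv: "\<And>X Y. X\<in>set v \<Longrightarrow> Y\<in>set v \<Longrightarrow> pos u X Y = pos v X Y"
    by (simp add: pos_def fD gmono)
  have posA: "\<not> pos u D A \<and> \<not> pos u A D" if "D \<in> set v" for D
    unfolding pos_def fA using fD[OF that] gne[of "fi v D"] gne[of "li v D"] by auto
  have lkD: "lk u p D = lk v p D" if D: "D \<in> set v" for D
  proof -
    have "lk u p D = T u p D A + (\<Sum>Y\<in>set v. T u p D Y)"
      unfolding lk_def setu using Anv by simp
    also have "(\<Sum>Y\<in>set v. T u p D Y) = (\<Sum>Y\<in>set v. T v p D Y)"
      by (rule sum.cong) (auto simp: T_def posvv D)
    finally show ?thesis using posA[OF D] by (simp add: T_def lk_def)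
  qed
  have lkA: "lk u p A = 0"
  proof -
    have "lk u p A = T u p A A + (\<Sum>Y\<in>set v. T u p A Y)"
      unfolding lk_def setu using Anv by simp
    also have "(\<Sum>Y\<in>set v. T u p A Y) = 0"
      by (rule sum.neutral) (auto simp: T_def posA)
    finally show ?thesis by (simp add: T_def pos_irr)
  qed
  have "Inv (u,p) = \<psi> (p A) (lk u p A) + (\<Sum>X\<in>set v. \<psi> (p X) (lk u p X))"
    unfolding Inv_def using Anv by (simp add: setu)
  also have "\<dots> = Inv (v,p)" unfolding Inv_def using lkA lkD by (simp add: C1)
  finally show ?thesis by (simp add: u_def v_def)
qed


lemma move2:
  assumes nu: "is_nanoword (x@[A,B]@y@[B,A]@z, p)" and nv: "is_nanoword (x@y@z, p)"
    and pB: "p B = \<tau> (p A)"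
  shows "Inv (x@[A,B]@y@[B,A]@z, p) = Inv (x@y@z, p)"
proof -
  define u where "u = x@[A,B]@y@[B,A]@z"
  define v where "v = x@y@z"
  define n where "n = length x"
  define m where "m = length y"
  have cu: "\<forall>B\<in>set u. count_list u B = 2" using nu by (simp add: is_nanoword_def u_def)
  have cv: "\<forall>B\<in>set v. count_list v B = 2" using nv by (simp add: is_nanoword_def v_def)
  have cA: "count_list u A = 2" using cu by (simp add: u_def)
  have cB: "count_list u B = 2" using cu by (simp add: u_def)
  have AB: "A \<noteq> B" using cA by (auto simp: u_def)
  have Anv: "A \<notin> set v" using cA AB by (simp add: u_def v_def count_list_0_iff)
  have Bnv: "B \<notin> set v" using cB AB by (simp add: u_def v_def count_list_0_iff)
  have setu: "set u = insert A (insert B (set v))" by (auto simp: u_def v_def)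
  define g where "g k = (if k < n then k else if k < n + m then k + 2 else k + 4)" for k
  have g: "\<And>i j. i<j \<Longrightarrow> g i < g j" by (auto simp: g_def)
  have gmono: "\<And>i j. g i < g j \<longleftrightarrow> i < j" by (auto simp: g_def)
  have gv: "\<And>k. k < length v \<Longrightarrow> g k < length u \<and> u!(g k) = v!k"
    by (auto simp: g_def u_def v_def n_def m_def nth_append)
  have fD: "\<And>D. D \<in> set v \<Longrightarrow> fi u D = g (fi v D) \<and> li u D = g (li v D)"
    using embed[OF cu cv g gv] by blast
  have fA: "fi u A = n" "li u A = n + m + 3"
    using fi_li_eq[of u A n "n + m + 3"] cA by (auto simp: u_def n_def m_def nth_append)
  have fB: "fi u B = Suc n" "li u B = n + m + 2"
    using fi_li_eq[of u B "Suc n" "n + m + 2"] cB by (auto simp: u_def n_def m_def nth_append)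
  have gne: "\<And>k. g k \<noteq> n \<and> g k \<noteq> Suc n \<and> g k \<noteq> n + m + 2 \<and> g k \<noteq> n + m + 3"
    by (simp add: g_def)
  have posvv: "\<And>X Y. X\<in>set v \<Longrightarrow> Y\<in>set v \<Longrightarrow> pos u X Y = pos v X Y"
    by (simp add: pos_def fD gmono)
  have posAB: "\<not> pos u A B" "\<not> pos u B A" by (auto simp: pos_def fA fB)
  have posD: "(pos u D A \<longleftrightarrow> pos u D B) \<and> (pos u A D \<longleftrightarrow> pos u B D)" if "D \<in> set v" for D
    unfolding pos_def fA fB using fD[OF that] gne[of "fi v D"] gne[of "li v D"] by auto
  have lkD: "lk u p D = lk v p D" if D: "D \<in> set v" for D
  proof -
    have "lk u p D = T u p D A + (T u p D B + (\<Sum>Y\<in>set v. T u p D Y))"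
      unfolding lk_def setu using Anv Bnv AB by simp
    also have "(\<Sum>Y\<in>set v. T u p D Y) = (\<Sum>Y\<in>set v. T v p D Y)"
      by (rule sum.cong) (auto simp: T_def posvv D)
    also have "T u p D A + (T u p D B + (\<Sum>Y\<in>set v. T v p D Y)) = (\<Sum>Y\<in>set v. T v p D Y)"
      using posD[OF D] by (auto simp: T_def pB C2a C2b)
    finally show ?thesis by (simp add: lk_def)
  qed
  have lkAB: "lk u p A = lk u p B"
  proof -
    have "lk u p A = T u p A A + (T u p A B + (\<Sum>Y\<in>set v. T u p A Y))"
      unfolding lk_def setu using Anv Bnv AB by simp
    also have "(\<Sum>Y\<in>set v. T u p A Y) = (\<Sum>Y\<in>set v. T u p B Y)"
      by (rule sum.cong) (auto simp: T_def posD)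
    also have "T u p A A + (T u p A B + (\<Sum>Y\<in>set v. T u p B Y)) =
       T u p B A + (T u p B B + (\<Sum>Y\<in>set v. T u p B Y))"
      by (simp add: T_def posAB pos_irr)
    also have "\<dots> = lk u p B" unfolding lk_def setu using Anv Bnv AB by simp
    finally show ?thesis .
  qed
  have "Inv (u,p) = \<psi> (p A) (lk u p A) + (\<psi> (p B) (lk u p B) + (\<Sum>X\<in>set v. \<psi> (p X) (lk u p X)))"
    unfolding Inv_def using Anv Bnv AB by (simp add: setu)
  also have "\<dots> = (\<Sum>X\<in>set v. \<psi> (p X) (lk u p X))"
    using lkAB by (simp add: pB C3)
  also have "\<dots> = Inv (v,p)" unfolding Inv_def using lkD by simp
  finally show ?thesis by (simp add: u_def v_def)
qed


lemma move3:
  assumes nu: "is_nanoword (x@[A,B]@y@[A,C]@z@[B,C]@t, p)"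
    and nv: "is_nanoword (x@[B,A]@y@[C,A]@z@[C,B]@t, p)"
    and d: "A \<noteq> B" "B \<noteq> C" "A \<noteq> C" and pAB: "p A = p B" and pBC: "p B = p C"
  shows "Inv (x@[A,B]@y@[A,C]@z@[B,C]@t, p) = Inv (x@[B,A]@y@[C,A]@z@[C,B]@t, p)"
proof -
  define u where "u = x@[A,B]@y@[A,C]@z@[B,C]@t"
  define v where "v = x@[B,A]@y@[C,A]@z@[C,B]@t"
  define n where "n = length x"
  define m where "m = length y"
  define q where "q = length z"
  have cu: "\<forall>B\<in>set u. count_list u B = 2" using nu by (simp add: is_nanoword_def u_def)
  have cv: "\<forall>B\<in>set v. count_list v B = 2" using nv by (simp add: is_nanoword_def v_def)
  have cA: "count_list u A = 2" "count_list v A = 2" using cu cv by (simp_all add: u_def v_def)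
  have cB: "count_list u B = 2" "count_list v B = 2" using cu cv by (simp_all add: u_def v_def)
  have cC: "count_list u C = 2" "count_list v C = 2" using cu cv by (simp_all add: u_def v_def)
  have len: "length u = length v" by (simp add: u_def v_def)
  have setuv: "set u = set v" by (auto simp: u_def v_def)
  define S where "S = {n, Suc n, n+m+2, n+m+3, n+m+q+4, n+m+q+5}"
  have uS: "u!n = A" "u!(Suc n) = B" "u!(n+m+2) = A" "u!(n+m+3) = C" "u!(n+m+q+4) = B" "u!(n+m+q+5) = C"
    by (simp_all add: u_def n_def m_def q_def nth_append)
  have vS: "v!n = B" "v!(Suc n) = A" "v!(n+m+2) = C" "v!(n+m+3) = A" "v!(n+m+q+4) = C" "v!(n+m+q+5) = B"
    by (simp_all add: v_def n_def m_def q_def nth_append)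
  have lenu: "n+m+q+5 < length u" by (simp add: u_def n_def m_def q_def)
  have same: "u!k = v!k" if "k < length u" "k \<notin> S" for k
    using that by (auto simp: u_def v_def n_def m_def q_def S_def nth_append nth_Cons' split: if_splits)
  have inS: "u!k \<in> {A,B,C} \<and> v!k \<in> {A,B,C}" if "k \<in> S" for k
    using that uS vS by (auto simp: S_def)
  have fuA: "fi u A = n" "li u A = n+m+2" using fi_li_eq[OF cA(1), of n "n+m+2"] uS lenu by auto
  have fuB: "fi u B = Suc n" "li u B = n+m+q+4" using fi_li_eq[OF cB(1), of "Suc n" "n+m+q+4"] uS lenu by auto
  have fuC: "fi u C = n+m+3" "li u C = n+m+q+5" using fi_li_eq[OF cC(1), of "n+m+3" "n+m+q+5"] uS lenu by auto
  have fvA: "fi v A = Suc n" "li v A = n+m+3" using fi_li_eq[OF cA(2), of "Suc n" "n+m+3"] vS lenu len by auto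
  have fvB: "fi v B = n" "li v B = n+m+q+5" using fi_li_eq[OF cB(2), of n "n+m+q+5"] vS lenu len by auto
  have fvC: "fi v C = n+m+2" "li v C = n+m+q+4" using fi_li_eq[OF cC(2), of "n+m+2" "n+m+q+4"] vS lenu len by auto
  have fD: "fi u D = fi v D \<and> li u D = li v D \<and> fi u D \<notin> S \<and> li u D \<notin> S"
    if D: "D \<in> set u" "D \<notin> {A,B,C}" for D
  proof -
    have eq: "\<And>k. (k < length u \<and> u!k = D) \<longleftrightarrow> (k < length v \<and> v!k = D)"
    proof -
      fix k
      show "(k < length u \<and> u!k = D) \<longleftrightarrow> (k < length v \<and> v!k = D)"
      proof (cases "k \<in> S")
        case True then show ?thesis using inS[OF True] D(2) by auto
      next
        case False then show ?thesis using same[of k] len by auto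
      qed
    qed
    have "fi u D = fi v D" unfolding fi_def by (simp only: eq)
    moreover have "li u D = li v D" unfolding li_def by (simp only: eq)
    moreover have "fi u D \<notin> S \<and> li u D \<notin> S"
    proof -
      have "u!(fi u D) = D" "u!(li u D) = D" using nw_occ[of u D] cu D(1) by auto
      then show ?thesis using inS D(2) by fastforce
    qed
    ultimately show ?thesis by blast
  qed
  have posDX: "(pos u D X \<longleftrightarrow> pos v D X) \<and> (pos u X D \<longleftrightarrow> pos v X D)"
    if D: "D \<in> set u" "D \<notin> {A,B,C}" and X: "X \<in> {A,B,C}" for D X
  proof -
    obtain i j where ij: "fi u D = i" "li u D = j" "fi v D = i" "li v D = j" "i \<notin> S" "j \<notin> S"
      using fD[OF D] by metis
    define s2 where "s2 = n+m+2"
    define s3 where "s3 = n+m+q+4"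
    have e: "n+m+3 = Suc s2" "n+m+q+5 = Suc s3" by (simp_all add: s2_def s3_def)
    have e2: "n+m+2 = s2" "n+m+q+4 = s3" by (simp_all add: s2_def s3_def)
    have Seq: "S = {n, Suc n, s2, Suc s2, s3, Suc s3}" unfolding S_def e e2 by (rule refl)
    have ne: "i \<noteq> n" "i \<noteq> Suc n" "i \<noteq> s2" "i \<noteq> Suc s2" "i \<noteq> s3" "i \<noteq> Suc s3"
       "j \<noteq> n" "j \<noteq> Suc n" "j \<noteq> s2" "j \<noteq> Suc s2" "j \<noteq> s3" "j \<noteq> Suc s3"
      using ij(5,6) unfolding Seq by auto
    show ?thesis using X unfolding pos_def ij(1-4)
      by (auto simp only: fuA fuB fuC fvA fvB fvC e s2_def[symmetric] s3_def[symmetric]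
          lt_shift1[OF ne(1)] lt_shift1[OF ne(3)] lt_shift1[OF ne(5)]
          lt_shift1[OF ne(7)] lt_shift1[OF ne(9)] lt_shift1[OF ne(11)]
          gt_shift1[OF ne(2)] gt_shift1[OF ne(4)] gt_shift1[OF ne(6)]
          gt_shift1[OF ne(8)] gt_shift1[OF ne(10)] gt_shift1[OF ne(12)])
  qed
  have posDE: "pos u D E \<longleftrightarrow> pos v D E"
    if "D \<in> set u" "D \<notin> {A,B,C}" "E \<in> set u" "E \<notin> {A,B,C}" for D E
    using fD[OF that(1,2)] fD[OF that(3,4)] by (simp add: pos_def)
  have Tsame: "T u p D Y = T v p D Y" if "D \<in> set u" "D \<notin> {A,B,C}" "Y \<in> set u" for D Y
  proof (cases "Y \<in> {A,B,C}")
    case True then show ?thesis using posDX[OF that(1,2) True] by (simp add: T_def)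
  next
    case False then show ?thesis using posDE[OF that(1,2) that(3) False] posDE[OF that(3) False that(1,2)]
      by (simp add: T_def)
  qed
  have lkD: "lk u p D = lk v p D" if "D \<in> set u" "D \<notin> {A,B,C}" for D
    unfolding lk_def setuv[symmetric] by (rule sum.cong) (simp_all add: Tsame[OF that])
  define R where "R = set u - {A,B,C}"
  have ABCu: "A \<in> set u" "B \<in> set u" "C \<in> set u" by (simp_all add: u_def)
  have setR: "set u = insert A (insert B (insert C R))" using ABCu by (auto simp: R_def)
  have Rn: "A \<notin> R" "B \<notin> R" "C \<notin> R" "finite R" by (auto simp: R_def)
  have TX: "T u p X Y = T v p X Y" if "X \<in> {A,B,C}" "Y \<in> R" for X Y
    using posDX[of Y X] that by (auto simp: T_def R_def)
  have lkX: "lk u p X = T u p X A + (T u p X B + (T u p X C + (\<Sum>Y\<in>R. T v p X Y)))"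
     "lk v p X = T v p X A + (T v p X B + (T v p X C + (\<Sum>Y\<in>R. T v p X Y)))"
    if "X \<in> {A,B,C}" for X
  proof -
    have "(\<Sum>Y\<in>R. T u p X Y) = (\<Sum>Y\<in>R. T v p X Y)" by (rule sum.cong) (simp_all add: TX[OF that])
    then show "lk u p X = T u p X A + (T u p X B + (T u p X C + (\<Sum>Y\<in>R. T v p X Y)))"
      unfolding lk_def setR using Rn d by simp
    show "lk v p X = T v p X A + (T v p X B + (T v p X C + (\<Sum>Y\<in>R. T v p X Y)))"
      unfolding lk_def setuv[symmetric] setR using Rn d by simp
  qed
  have pu: "pos u A B" "\<not> pos u B A" "\<not> pos u A C" "\<not> pos u C A" "pos u B C" "\<not> pos u C B"
    by (simp_all add: pos_def fuA fuB fuC)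
  have pv: "\<not> pos v A B" "\<not> pos v B A" "pos v A C" "\<not> pos v C A" "\<not> pos v B C" "\<not> pos v C B"
    by (simp_all add: pos_def fvA fvB fvC)
  have lkA: "lk u p A = lk v p A"
    using lkX[of A] pu pv pAB pBC by (simp add: T_def pos_irr)
  have lkC: "lk u p C = lk v p C"
    using lkX[of C] pu pv pAB pBC by (simp add: T_def pos_irr)
  have lkB: "lk u p B = lk v p B + (\<chi>2 (p B) + \<chi>1 (p B))"
    using lkX[of B] pu pv pAB pBC by (simp add: T_def pos_irr algebra_simps)
  have "\<psi> (p X) (lk u p X) = \<psi> (p X) (lk v p X)" if "X \<in> set u" for X
  proof (cases "X \<in> {A,B,C}")
    case True then show ?thesis using lkA lkB lkC C4 by auto
  next
    case False then show ?thesis using lkD that by simp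
  qed
  then have "Inv (u,p) = Inv (v,p)" unfolding Inv_def using setuv by (simp cong: sum.cong)
  then show ?thesis by (simp add: u_def v_def)
qed


lemma iso_inv:
  assumes "nw_iso u v" shows "Inv u = Inv v"
proof -
  obtain w p where u: "u = (w,p)" by (cases u)
  obtain w' p' where v: "v = (w',p')" by (cases v)
  obtain f where f: "bij_betw f (set w) (set w')" "\<And>A. A\<in>set w \<Longrightarrow> p' (f A) = p A" "w' = map f w"
    using assms by (auto simp: nw_iso_def u v)
  have cw: "\<forall>A\<in>set w. count_list w A = 2" and cw': "\<forall>A\<in>set w'. count_list w' A = 2"
    using assms by (auto simp: nw_iso_def is_nanoword_def u v)
  have fX: "fi w' (f X) = fi w X \<and> li w' (f X) = li w X" if X: "X \<in> set w" for X
  proof -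
    have o: "fi w X < li w X" "li w X < length w" "w!(fi w X) = X" "w!(li w X) = X"
      using nw_occ[of w X] cw X by auto
    have fXs: "f X \<in> set w'" using f(1) X by (auto simp: bij_betw_def)
    have c: "count_list w' (f X) = 2" using cw' fXs by auto
    have "fi w' (f X) = fi w X" "li w' (f X) = li w X"
      using fi_li_eq[OF c o(1)] o f(3) by auto
    then show ?thesis by simp
  qed
  have posf: "pos w' (f X) (f Y) = pos w X Y" if "X \<in> set w" "Y \<in> set w" for X Y
    using fX[OF that(1)] fX[OF that(2)] by (simp add: pos_def)
  have lkf: "lk w' p' (f X) = lk w p X" if X: "X \<in> set w" for X
  proof -
    have "lk w' p' (f X) = (\<Sum>Y\<in>set w. T w' p' (f X) (f Y))"
      unfolding lk_def by (rule sum.reindex_bij_betw[OF f(1), symmetric])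
    also have "\<dots> = (\<Sum>Y\<in>set w. T w p X Y)"
      by (rule sum.cong) (simp_all add: T_def posf X f(2))
    finally show ?thesis by (simp add: lk_def)
  qed
  have "Inv v = (\<Sum>X\<in>set w. \<psi> (p' (f X)) (lk w' p' (f X)))"
    unfolding Inv_def v fst_conv snd_conv by (rule sum.reindex_bij_betw[OF f(1), symmetric])
  also have "\<dots> = Inv u" unfolding Inv_def u fst_conv snd_conv
    by (rule sum.cong) (simp_all add: lkf f(2))
  finally show ?thesis by simp
qed

lemma move_inv:
  assumes "nw_move \<tau> u v" shows "Inv u = Inv v"
proof -
  obtain w p where u: "u = (w,p)" by (cases u)
  obtain w' p' where v: "v = (w',p')" by (cases v)
  have nu: "is_nanoword (w,p)" and nv: "is_nanoword (w',p)" and pp: "p' = p"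
    using assms by (auto simp: nw_move_def u v)
  from assms have "(\<exists>x y A. w = x @ [A, A] @ y \<and> w' = x @ y)
   \<or> (\<exists>x y z A B. w = x @ [A, B] @ y @ [B, A] @ z \<and> w' = x @ y @ z
          \<and> p B = \<tau> (p A))
   \<or> (\<exists>x y z t A B C. w = x @ [A, B] @ y @ [A, C] @ z @ [B, C] @ t
          \<and> w' = x @ [B, A] @ y @ [C, A] @ z @ [C, B] @ t
          \<and> A \<noteq> B \<and> B \<noteq> C \<and> A \<noteq> C
          \<and> p A = p B \<and> p B = p C)"
    by (simp add: nw_move_def u v)
  then have "Inv (w,p) = Inv (w',p)"
  proof (elim disjE exE conjE)
    fix x y A assume "w = x @ [A, A] @ y" "w' = x @ y"
    then show ?thesis using move1 nu nv by simp
  next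
    fix x y z A B assume "w = x @ [A, B] @ y @ [B, A] @ z" "w' = x @ y @ z" "p B = \<tau> (p A)"
    then show ?thesis using move2 nu nv by simp
  next
    fix x y z t A B C assume "w = x @ [A, B] @ y @ [A, C] @ z @ [B, C] @ t"
      "w' = x @ [B, A] @ y @ [C, A] @ z @ [C, B] @ t" "A \<noteq> B" "B \<noteq> C" "A \<noteq> C"
      "p A = p B" "p B = p C"
    then show ?thesis using move3 nu nv by simp
  qed
  then show ?thesis by (simp add: u v pp)
qed

lemma hom_inv:
  assumes "nw_homotopic \<tau> u v" shows "Inv u = Inv v"
  using assms unfolding nw_homotopic_def
proof (induction rule: rtranclp_induct)
  case base then show ?case by simp
next
  case (step y z)
  have "Inv y = Inv z" using step(2) iso_inv[of y z] iso_inv[of z y] move_inv[of y z] move_inv[of z y]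
    by (auto simp: symclp_def)
  then show ?case using step(3) by simp
qed


lemma Inv_empty: "Inv nw_empty = 0"
  by (simp add: Inv_def nw_empty_def)

lemma Inv_wab: "Inv (w_ab a b) = \<psi> a (\<chi>1 b) + \<psi> b (\<chi>2 a)"
proof -
  define w :: "nat list" where "w = [0,1,0,1]"
  define p where "p = (\<lambda>n::nat. if n = 0 then a else b)"
  have f0: "fi w 0 = 0" "li w 0 = 2" using fi_li_eq[of w 0 0 2] by (simp_all add: w_def)
  have f1: "fi w 1 = 1" "li w 1 = 3" using fi_li_eq[of w 1 1 3] by (simp_all add: w_def)
  then have f1': "fi w (Suc 0) = 1" "li w (Suc 0) = 3" by simp_all
  have sw: "set w = {0,1}" by (auto simp: w_def)
  have p01: "pos w 0 1" "\<not> pos w 1 0" "pos w 0 (Suc 0)" "\<not> pos w (Suc 0) 0" by (simp_all add: pos_def f0 f1 f1')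
  have l0: "lk w p 0 = \<chi>1 b" by (simp add: lk_def sw T_def p01 pos_irr p_def)
  have l1: "lk w p 1 = \<chi>2 a" by (simp add: lk_def sw T_def p01 pos_irr p_def)
  have l1': "lk w p (Suc 0) = \<chi>2 a" using l1 by simp
  have pv: "p 0 = a" "p 1 = b" "p (Suc 0) = b" by (simp_all add: p_def)
  have "Inv (w,p) = \<psi> a (\<chi>1 b) + \<psi> b (\<chi>2 a)" by (simp add: Inv_def sw l0 l1 l1' pv)
  then show ?thesis by (simp add: w_ab_def w_def p_def)
qed

end

definition E :: "('a \<Rightarrow> 'a) \<Rightarrow> 'a \<Rightarrow> 'a \<Rightarrow> int" where
  "E \<tau> a0 x = (if x = a0 then 1 else if x = \<tau> a0 then -1 else 0)"

lemma char2_neg: "(1::'g::ring_1) + 1 = 0 \<Longrightarrow> (x::'g) = - x"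
proof -
  assume h: "(1::'g) + 1 = 0"
  have "x + x = (1 + 1) * x" by (simp only: distrib_right mult_1_left)
  then have "x + x = 0" using h by simp
  then show ?thesis by (simp add: eq_neg_iff_add_eq_0)
qed

lemma E_tau:
  assumes invol: "\<And>x. \<tau> (\<tau> x) = x" and ch: "((1::'g::ring_1) + 1 = 0) = (\<tau> a0 = a0)"
  shows "(of_int (E \<tau> a0 (\<tau> x)) :: 'g) = - of_int (E \<tau> a0 x)"
proof (cases "\<tau> a0 = a0")
  case True
  have "\<tau> x = a0 \<longleftrightarrow> x = a0" using True invol by metis
  then have "E \<tau> a0 (\<tau> x) = E \<tau> a0 x" using True by (simp add: E_def)
  then show ?thesis using char2_neg[of "of_int (E \<tau> a0 x) :: 'g"] True ch by simp
next
  case False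
  have "\<tau> x = a0 \<longleftrightarrow> x = \<tau> a0" "\<tau> x = \<tau> a0 \<longleftrightarrow> x = a0" using invol by metis+
  then show ?thesis using False by (auto simp: E_def)
qed

lemma E_vals: "E \<tau> a0 x \<in> {-1,0,1}" by (simp add: E_def)

lemma of_int_E_one:
  assumes ch: "((1::'g::ring_1) + 1 = 0) = (\<tau> z = z)"
  shows "((of_int (E \<tau> z x) :: 'g) = 1) \<longleftrightarrow> x = z"
proof -
  have "(of_int (-1) :: 'g) = 1 \<Longrightarrow> (1::'g) + 1 = 0"
    by (metis add.right_inverse of_int_1 of_int_minus)
  then show ?thesis using ch by (auto simp: E_def)
qed

lemma of_int_negE_one:
  assumes invol: "\<And>x. \<tau> (\<tau> x) = x" and ch: "((1::'g::ring_1) + 1 = 0) = (\<tau> z = z)"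
  shows "((- of_int (E \<tau> z x) :: 'g) = 1) \<longleftrightarrow> x = \<tau> z"
proof -
  have m: "(- 1 :: 'g) = 1 \<longleftrightarrow> (1::'g) + 1 = 0"
    by (metis add.right_inverse add_right_cancel minus_minus)
  show ?thesis
  proof (cases "\<tau> z = z")
    case True then show ?thesis using m ch by (auto simp: E_def)
  next
    case False then show ?thesis using m ch by (auto simp: E_def)
  qed
qed

lemma key_val:
  fixes a' b' :: 'a and \<tau> :: "'a \<Rightarrow> 'a"
  assumes ch: "((1::'h::ring_1) + 1 = 0) = (\<tau> a0 = a0)" and nt: "\<tau> a' \<noteq> b'"
    and invol: "\<And>x. \<tau> (\<tau> x) = x"
    and h: "(of_int (E \<tau> a0 a') :: 'h) * (if b' = b0 then 1 else 0) +
            of_int (E \<tau> a0 b') * (if a' = \<tau> b0 then 1 else 0) = 1"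
  shows "(a' = a0 \<and> b' = b0) \<or> (a' = \<tau> b0 \<and> b' = a0)"
proof -
  have "\<not> (b' = b0 \<and> a' = \<tau> b0)" using nt invol by metis
  then consider "b' = b0" "a' \<noteq> \<tau> b0" | "b' \<noteq> b0" "a' = \<tau> b0" | "b' \<noteq> b0" "a' \<noteq> \<tau> b0" by blast
  then show ?thesis
  proof cases
    case 1 then show ?thesis using h of_int_E_one[where \<tau>=\<tau> and z=a0 and x=a', OF ch] by simp
  next
    case 2 then show ?thesis using h of_int_E_one[where \<tau>=\<tau> and z=a0 and x=b', OF ch] by simp
  next
    case 3 then show ?thesis using h by simp
  qed
qed

lemma key:
  fixes G :: "'g::ring_1 itself" and H :: "'h::ring_1 itself" and \<tau> :: "'a \<Rightarrow> 'a"
  assumes invol: "\<And>x. \<tau> (\<tau> x) = x"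
    and cg: "((1::'g) + 1 = 0) = (\<tau> b0 = b0)" and ch: "((1::'h) + 1 = 0) = (\<tau> a0 = a0)"
    and nt0: "\<tau> a0 \<noteq> b0"
  shows "\<not> nw_contractible \<tau> (w_ab a0 b0)"
    and "\<tau> a' \<noteq> b' \<Longrightarrow> nw_homotopic \<tau> (w_ab a0 b0) (w_ab a' b') \<Longrightarrow>
           (a' = a0 \<and> b' = b0) \<or> (a' = \<tau> b0 \<and> b' = a0)"
proof -
  define \<chi>1 :: "'a \<Rightarrow> 'g" where "\<chi>1 c = of_int (E \<tau> b0 c)" for c
  define \<chi>2 :: "'a \<Rightarrow> 'g" where "\<chi>2 c = - \<chi>1 c" for c
  define \<psi> :: "'a \<Rightarrow> 'g \<Rightarrow> 'h" where
    "\<psi> x t = (of_int (E \<tau> a0 x) :: 'h) * (if t = \<chi>1 b0 then 1 else 0)" for x t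
  have cb0: "\<chi>1 b0 = 1" by (simp add: \<chi>1_def E_def)
  interpret invd \<tau> \<chi>1 \<chi>2 \<psi>
  proof
    show "\<psi> x 0 = 0" for x using cb0 by (simp add: \<psi>_def)
    show "\<chi>1 (\<tau> a) = - \<chi>1 a" for a unfolding \<chi>1_def by (rule E_tau[OF invol cg])
    then show "\<chi>2 (\<tau> a) = - \<chi>2 a" for a by (simp add: \<chi>2_def)
    show "\<psi> (\<tau> a) L = - \<psi> a L" for a L unfolding \<psi>_def using E_tau[OF invol ch, of a] by simp
    show "\<psi> a (L + (\<chi>2 a + \<chi>1 a)) = \<psi> a L" for a L by (simp add: \<chi>2_def)
  qed
  have val: "Inv (w_ab x y) = (of_int (E \<tau> a0 x) :: 'h) * (if y = b0 then 1 else 0) +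
            of_int (E \<tau> a0 y) * (if x = \<tau> b0 then 1 else 0)" for x y
  proof -
    have "\<chi>1 y = 1 \<longleftrightarrow> y = b0" unfolding \<chi>1_def by (rule of_int_E_one[where \<tau>=\<tau> and z=b0, OF cg])
    then have "\<chi>1 y = \<chi>1 b0 \<longleftrightarrow> y = b0" by (simp only: cb0)
    moreover have "\<chi>2 x = 1 \<longleftrightarrow> x = \<tau> b0" unfolding \<chi>2_def \<chi>1_def
      by (rule of_int_negE_one[where \<tau>=\<tau> and z=b0, OF invol cg])
    then have "\<chi>2 x = \<chi>1 b0 \<longleftrightarrow> x = \<tau> b0" by (simp only: cb0)
    ultimately show ?thesis unfolding Inv_wab by (simp add: \<psi>_def)
  qed
  have v0: "Inv (w_ab a0 b0) = 1"
  proof -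
    have "a0 \<noteq> \<tau> b0" using nt0 invol by metis
    then show ?thesis unfolding val by (simp add: E_def)
  qed
  show "\<not> nw_contractible \<tau> (w_ab a0 b0)"
  proof
    assume "nw_contractible \<tau> (w_ab a0 b0)"
    then have "Inv (w_ab a0 b0) = Inv nw_empty" using hom_inv by (simp add: nw_contractible_def)
    then show False using v0 Inv_empty by simp
  qed
  assume nt: "\<tau> a' \<noteq> b'" and hh: "nw_homotopic \<tau> (w_ab a0 b0) (w_ab a' b')"
  have "Inv (w_ab a' b') = 1" using hom_inv[OF hh] v0 by simp
  then show "(a' = a0 \<and> b' = b0) \<or> (a' = \<tau> b0 \<and> b' = a0)"
    using key_val[OF ch nt invol] unfolding val by blast
qed


lemma swap_fixed:
  fixes \<tau> :: "'a \<Rightarrow> 'a"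
  assumes invol: "\<And>x. \<tau> (\<tau> x) = x" and fa: "\<tau> a0 = a0" and fb: "\<tau> b0 = b0" and ab: "a0 \<noteq> b0"
  shows "\<not> nw_homotopic \<tau> (w_ab a0 b0) (w_ab b0 a0)"
proof
  assume hh: "nw_homotopic \<tau> (w_ab a0 b0) (w_ab b0 a0)"
  define \<chi>1 :: "'a \<Rightarrow> bit" where "\<chi>1 c = (if c = b0 then 1 else 0)" for c
  define \<chi>2 :: "'a \<Rightarrow> bit" where "\<chi>2 c = 0" for c
  define \<psi> :: "'a \<Rightarrow> bit \<Rightarrow> bit" where "\<psi> x t = (if x = a0 then t else 0)" for x t
  have tb: "\<tau> c = b0 \<longleftrightarrow> c = b0" for c using invol fb by metis
  have ta: "\<tau> c = a0 \<longleftrightarrow> c = a0" for c using invol fa by metis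
  interpret invd \<tau> \<chi>1 \<chi>2 \<psi>
  proof
    show "\<psi> x 0 = 0" for x by (simp add: \<psi>_def)
    show "\<chi>1 (\<tau> a) = - \<chi>1 a" for a by (simp add: \<chi>1_def tb)
    show "\<chi>2 (\<tau> a) = - \<chi>2 a" for a by (simp add: \<chi>2_def)
    show "\<psi> (\<tau> a) L = - \<psi> a L" for a L by (simp add: \<psi>_def ta)
    show "\<psi> a (L + (\<chi>2 a + \<chi>1 a)) = \<psi> a L" for a L using ab by (simp add: \<psi>_def \<chi>1_def \<chi>2_def)
  qed
  have "Inv (w_ab a0 b0) = 1" using ab by (simp add: Inv_wab \<psi>_def \<chi>1_def \<chi>2_def)
  moreover have "Inv (w_ab b0 a0) = 0" using ab by (simp add: Inv_wab \<psi>_def \<chi>1_def \<chi>2_def)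
  moreover have "Inv (w_ab a0 b0) = Inv (w_ab b0 a0)" by (rule hom_inv[OF hh])
  ultimately show False by simp
qed

lemma key_all:
  fixes \<tau> :: "'a \<Rightarrow> 'a"
  assumes invol: "\<And>x. \<tau> (\<tau> x) = x" and nt0: "\<tau> a0 \<noteq> b0"
  shows "\<not> nw_contractible \<tau> (w_ab a0 b0) \<and>
    (\<forall>a' b'. \<tau> a' \<noteq> b' \<longrightarrow> nw_homotopic \<tau> (w_ab a0 b0) (w_ab a' b') \<longrightarrow>
           (a' = a0 \<and> b' = b0) \<or> (a' = \<tau> b0 \<and> b' = a0))"
proof -
  have i2: "((1::int) + 1 = 0) = False" by simp
  have b2: "((1::bit) + 1 = 0) = True" by simp
  show ?thesis
  proof (cases "\<tau> b0 = b0")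
    case Tb: True
    show ?thesis
    proof (cases "\<tau> a0 = a0")
      case True
      note k = key[where 'g = bit and 'h = bit, OF invol _ _ nt0]
      show ?thesis using k b2 Tb True by simp
    next
      case False
      note k = key[where 'g = bit and 'h = int, OF invol _ _ nt0]
      show ?thesis using k b2 i2 Tb False by simp
    qed
  next
    case Fb: False
    show ?thesis
    proof (cases "\<tau> a0 = a0")
      case True
      note k = key[where 'g = int and 'h = bit, OF invol _ _ nt0]
      show ?thesis using k b2 i2 Fb True by simp
    next
      case False
      note k = key[where 'g = int and 'h = int, OF invol _ _ nt0]
      show ?thesis using k i2 Fb False by simp
    qed
  qed
qed

theorem theorem8p3:
  fixes \<tau> :: "'a \<Rightarrow> 'a"
  assumes invol: "\<And>x. \<tau> (\<tau> x) = x"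
  shows "(\<forall>a b. \<tau> a \<noteq> b \<longrightarrow> \<not> nw_contractible \<tau> (w_ab a b))
    \<and> (\<forall>a b a' b'. \<tau> a \<noteq> b \<longrightarrow> \<tau> a' \<noteq> b' \<longrightarrow>
          (nw_homotopic \<tau> (w_ab a b) (w_ab a' b') \<longleftrightarrow> a = a' \<and> b = b'))"
proof (intro conjI allI impI)
  fix a b assume "\<tau> a \<noteq> b"
  then show "\<not> nw_contractible \<tau> (w_ab a b)" using key_all[OF invol] by blast
next
  fix a b a' b' assume n1: "\<tau> a \<noteq> b" and n2: "\<tau> a' \<noteq> b'"
  show "nw_homotopic \<tau> (w_ab a b) (w_ab a' b') \<longleftrightarrow> a = a' \<and> b = b'"
  proof
    assume h: "nw_homotopic \<tau> (w_ab a b) (w_ab a' b')"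
    then have h': "nw_homotopic \<tau> (w_ab a' b') (w_ab a b)"
      unfolding nw_homotopic_def by (rule rtranclp_symclp_sym)
    have D1: "(a' = a \<and> b' = b) \<or> (a' = \<tau> b \<and> b' = a)" using key_all[OF invol n1] n2 h by blast
    have D2: "(a = a' \<and> b = b') \<or> (a = \<tau> b' \<and> b = a')" using key_all[OF invol n2] n1 h' by blast
    show "a = a' \<and> b = b'"
    proof (rule ccontr)
      assume ne: "\<not> (a = a' \<and> b = b')"
      then have e: "a' = \<tau> b" "b' = a" "a = \<tau> b'" "b = a'" using D1 D2 by auto
      have fa: "\<tau> a = a" using e(2,3) by metis
      have fb: "\<tau> b = b" using e(1,4) by metis
      have ab: "a \<noteq> b" using n1 fa by metis
      have "w_ab a' b' = w_ab b a" using e(2,4) by metis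
      then show False using swap_fixed[OF invol fa fb ab] h by metis
    qed
  next
    assume "a = a' \<and> b = b'"
    then show "nw_homotopic \<tau> (w_ab a b) (w_ab a' b')" by (simp add: nw_homotopic_def)
  qed
qed

end
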